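(* Let $\mathcal I$ be an ideal on $\omega$, let $X$ be a topological space with $X=\bigcup\{X_\alpha:\alpha<\kappa\}$ for a cardinal $\kappa$, and let $(f_n)$ be a sequence in $\mathcal C(X)$. (1) If $\kappa<\mathfrak b_s(\mathcal I)$ and $(f_n\restriction X_\alpha)$ is $\mathcal I$-quasi-normally convergent to $0$ for every $\alpha<\kappa$, then $(f_n)$ is $\mathcal I$-quasi-normally convergent to $0$. (2) If $\kappa<\mathfrak b_\sigma(\mathcal I)$ and $(f_n\restriction X_\alpha)$ is $\mathcal I$-$\sigma$-uniformly convergent to $0$ for every $\alpha<\kappa$, then $(f_n)$ is $\mathcal I$-$\sigma$-uniformly convergent to $0$.
   Context: An ideal on $\omega$ is a family $\mathcal I\subseteq\mathcal P(\omega)$ closed under finite unions and subsets, containing all finite sets, with $\omega\notin\mathcal I$. A real sequence $(a_n)$ is $\mathcal I$-convergent to $0$ if $\{n:|a_n|\ge\varepsilon\}\in\mathcal I$ for all $\varepsilon>0$. For a sequence $(f_n)$ of real functions on a set $Y$: $\mathcal I$-uniform convergence to $0$ means $\{n:\exists x\in Y\,(|f_n(x)|\ge\varepsilon)\}\in\mathcal I$ for each $\varepsilon>0$; $\mathcal I$-$\sigma$-uniform means $Y=\bigcup_{k\in\omega}Y_k$ with $(f_n\restriction Y_k)$ $\mathcal I$-uniformly convergent to $0$ for each $k$; $\mathcal I$-quasi-normal means there is a sequence $(\varepsilon_n)$ of positive reals $\mathcal I$-convergent to $0$ with $\{n:|f_n(x)|\ge\varepsilon_n\}\in\mathcal I$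 for each $x\in Y$. $\mathcal C(X)$ = continuous real functions on $X$. Cardinals (convention $\min\emptyset=\infty$, $\kappa<\infty$ for all cardinals): $\widehat{\mathcal P}_{\mathcal I}$ = sequences $(A_n)\in\mathcal I^\omega$ of pairwise disjoint sets; $\mathcal P_{\mathcal I}$ = those with $\bigcup_nA_n=\omega$; $\mathcal M_{\mathcal I}$ = sequences $(E_k)\in\mathcal I^\omega$ with $E_k\subseteq E_{k+1}$. $\mathfrak b_s(\mathcal I)=\min\{|\mathcal E|:\mathcal E\subseteq\widehat{\mathcal P}_{\mathcal I}$ and for every $(A_n)\in\mathcal P_{\mathcal I}$ there is $(E_n)\in\mathcal E$ with $\bigcup_n(A_{n+1}\cap\bigcup_{i\le n}E_i)\notin\mathcal I\}$; $\mathfrak b_\sigma(\mathcal I)=\min\{|\mathcal E|:\mathcal E\subseteq\mathcal M_{\mathcal I}$ and for every $(A_n)\in\mathcal M_{\mathcal I}$ there is $(E_n)\in\mathcal E$ with $E_n\not\subseteq A_n$ for infinitely many $n\}$. *)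

theory Defs
  imports "HOL-Analysis.Analysis"
begin

definition is_ideal :: "nat set set \<Rightarrow> bool" where
  "is_ideal I \<longleftrightarrow>
     (\<forall>A B. A \<in> I \<longrightarrow> B \<in> I \<longrightarrow> A \<union> B \<in> I) \<and>
     (\<forall>A B. A \<in> I \<longrightarrow> B \<subseteq> A \<longrightarrow> B \<in> I) \<and>
     (\<forall>F. finite F \<longrightarrow> F \<in> I) \<and>
     (UNIV::nat set) \<notin> I"

definition I_conv0 :: "nat set set \<Rightarrow> (nat \<Rightarrow> real) \<Rightarrow> bool" where
  "I_conv0 I a \<longleftrightarrow> (\<forall>\<epsilon>>0. {n. \<bar>a n\<bar> \<ge> \<epsilon>} \<in> I)"

definition I_uniform0 :: "nat set set \<Rightarrow> (nat \<Rightarrow> 'a \<Rightarrow> real) \<Rightarrow> 'a set \<Rightarrow> bool" where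
  "I_uniform0 I f Y \<longleftrightarrow> (\<forall>\<epsilon>>0. {n. \<exists>x\<in>Y. \<bar>f n x\<bar> \<ge> \<epsilon>} \<in> I)"

definition I_sigma_uniform0 :: "nat set set \<Rightarrow> (nat \<Rightarrow> 'a \<Rightarrow> real) \<Rightarrow> 'a set \<Rightarrow> bool" where
  "I_sigma_uniform0 I f Y \<longleftrightarrow>
     (\<exists>Yk :: nat \<Rightarrow> 'a set. Y = (\<Union>k. Yk k) \<and> (\<forall>k. I_uniform0 I f (Yk k)))"

definition I_quasi_normal0 :: "nat set set \<Rightarrow> (nat \<Rightarrow> 'a \<Rightarrow> real) \<Rightarrow> 'a set \<Rightarrow> bool" where
  "I_quasi_normal0 I f Y \<longleftrightarrow>
     (\<exists>\<epsilon> :: nat \<Rightarrow> real. (\<forall>n. \<epsilon> n > 0) \<and> I_conv0 I \<epsilon> \<and>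
        (\<forall>x\<in>Y. {n. \<bar>f n x\<bar> \<ge> \<epsilon> n} \<in> I))"

definition hatP :: "nat set set \<Rightarrow> (nat \<Rightarrow> nat set) set" where
  "hatP I = {A. (\<forall>n. A n \<in> I) \<and> (\<forall>m n. m \<noteq> n \<longrightarrow> A m \<inter> A n = {})}"

definition PI :: "nat set set \<Rightarrow> (nat \<Rightarrow> nat set) set" where
  "PI I = {A. A \<in> hatP I \<and> (\<Union>n. A n) = UNIV}"

definition MI :: "nat set set \<Rightarrow> (nat \<Rightarrow> nat set) set" where
  "MI I = {E. (\<forall>n. E n \<in> I) \<and> (\<forall>k. E k \<subseteq> E (Suc k))}"

text \<open>Families witnessing the definitions of b_s(I) and b_sigma(I).\<close>
definition bs_witness :: "nat set set \<Rightarrow> (nat \<Rightarrow> nat set) set \<Rightarrow> bool" where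
  "bs_witness I \<E> \<longleftrightarrow> \<E> \<subseteq> hatP I \<and>
     (\<forall>A\<in>PI I. \<exists>E\<in>\<E>. (\<Union>n. A (Suc n) \<inter> (\<Union>i\<le>n. E i)) \<notin> I)"

definition bsigma_witness :: "nat set set \<Rightarrow> (nat \<Rightarrow> nat set) set \<Rightarrow> bool" where
  "bsigma_witness I \<E> \<longleftrightarrow> \<E> \<subseteq> MI I \<and>
     (\<forall>A\<in>MI I. \<exists>E\<in>\<E>. infinite {n. \<not> E n \<subseteq> A n})"

text \<open>|K| < b_s(I): |K| is strictly below the cardinality of every witness family
  (vacuous if there is none, matching the convention min {} = infinity).\<close>
definition card_lt_bs :: "'k set \<Rightarrow> nat set set \<Rightarrow> bool" where
  "card_lt_bs K I \<longleftrightarrow> (\<forall>\<E>. bs_witness I \<E> \<longrightarrow> (card_of K, card_of \<E>) \<in> ordLess)"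

definition card_lt_bsigma :: "'k set \<Rightarrow> nat set set \<Rightarrow> bool" where
  "card_lt_bsigma K I \<longleftrightarrow> (\<forall>\<E>. bsigma_witness I \<E> \<longrightarrow> (card_of K, card_of \<E>) \<in> ordLess)"

end

theory Submission
  imports Defs
begin

lemma ideal_un: "is_ideal I \<Longrightarrow> A \<in> I \<Longrightarrow> B \<in> I \<Longrightarrow> A \<union> B \<in> I"
  unfolding is_ideal_def by blast

lemma ideal_sub: "is_ideal I \<Longrightarrow> A \<in> I \<Longrightarrow> B \<subseteq> A \<Longrightarrow> B \<in> I"
  unfolding is_ideal_def by blast

lemma ideal_empty: "is_ideal I \<Longrightarrow> {} \<in> I"
  unfolding is_ideal_def by blast

lemma ideal_fin_Union:
  assumes "is_ideal I" "finite S" "\<And>s. s \<in> S \<Longrightarrow> g s \<in> I"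
  shows "(\<Union>s\<in>S. g s) \<in> I"
  using assms(2,3)
proof (induction S rule: finite_induct)
  case empty then show ?case using ideal_empty[OF assms(1)] by simp
next
  case (insert x F) then show ?case using ideal_un[OF assms(1)] by simp
qed

lemma not_witness_image:
  assumes "(\<forall>\<E>. W \<E> \<longrightarrow> (card_of K, card_of \<E>) \<in> ordLess)"
  shows "\<not> W (g ` K)"
proof
  assume "W (g ` K)"
  with assms have "(card_of K, card_of (g ` K)) \<in> ordLess" by blast
  then have "(card_of (g ` K), card_of K) \<notin> ordLeq" by (rule not_ordLess_ordLeq)
  with card_of_image show False by blast
qed

lemma part2:
  fixes I :: "nat set set" and T :: "'a set" and K :: "'k set"
    and XA :: "'k \<Rightarrow> 'a set" and f :: "nat \<Rightarrow> 'a \<Rightarrow> real"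
  assumes I: "is_ideal I"
    and T: "T = (\<Union>\<alpha>\<in>K. XA \<alpha>)"
    and cl: "card_lt_bsigma K I" and su: "\<forall>\<alpha>\<in>K. I_sigma_uniform0 I f (XA \<alpha>)"
  shows "I_sigma_uniform0 I f T"
proof -
  define Y where "Y \<alpha> = (SOME Yk :: nat \<Rightarrow> 'a set. XA \<alpha> = (\<Union>k. Yk k) \<and> (\<forall>k. I_uniform0 I f (Yk k)))" for \<alpha>
  have Y: "XA \<alpha> = (\<Union>k. Y \<alpha> k) \<and> (\<forall>k. I_uniform0 I f (Y \<alpha> k))" if "\<alpha> \<in> K" for \<alpha>
  proof -
    have "\<exists>Yk :: nat \<Rightarrow> 'a set. XA \<alpha> = (\<Union>k. Yk k) \<and> (\<forall>k. I_uniform0 I f (Yk k))"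
      using su that unfolding I_sigma_uniform0_def by blast
    then show ?thesis unfolding Y_def by (rule someI_ex)
  qed
  define B where "B \<alpha> k m = {n. \<exists>x\<in>Y \<alpha> k. \<bar>f n x\<bar> \<ge> 1 / (real m + 1)}" for \<alpha> k m
  have BI: "B \<alpha> k m \<in> I" if "\<alpha> \<in> K" for \<alpha> k m
  proof -
    have "1 / (real m + 1) > 0" by simp
    then show ?thesis using Y[OF that] unfolding B_def I_uniform0_def by blast
  qed
  define E where "E \<alpha> j = (\<Union>p\<in>{..j}\<times>{..j}. B \<alpha> (fst p) (snd p))" for \<alpha> j
  have EMI: "E \<alpha> \<in> MI I" if "\<alpha> \<in> K" for \<alpha>
  proof -
    have "E \<alpha> n \<in> I" for n unfolding E_def
      by (rule ideal_fin_Union[OF I]) (auto intro: BI[OF that])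
    moreover have "E \<alpha> k \<subseteq> E \<alpha> (Suc k)" for k
      unfolding E_def by (intro UN_mono) auto
    ultimately show ?thesis unfolding MI_def by blast
  qed
  have "\<not> bsigma_witness I (E ` K)"
    using not_witness_image[of "bsigma_witness I" K] cl unfolding card_lt_bsigma_def by blast
  moreover have "E ` K \<subseteq> MI I" using EMI by blast
  ultimately obtain A where A: "A \<in> MI I" and fin: "\<And>\<alpha>. \<alpha> \<in> K \<Longrightarrow> finite {n. \<not> E \<alpha> n \<subseteq> A n}"
    unfolding bsigma_witness_def by blast
  define Z where "Z j k = (\<Union>\<alpha>\<in>{\<alpha>\<in>K. \<forall>i\<ge>j. E \<alpha> i \<subseteq> A i}. Y \<alpha> k)" for j k
  define Yk where "Yk p = Z (fst (prod_decode p)) (snd (prod_decode p))" for p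
  have AI: "A i \<in> I" for i using A unfolding MI_def by blast
  have Zu: "I_uniform0 I f (Z j k)" for j k
    unfolding I_uniform0_def
  proof (intro allI impI)
    fix e :: real assume "e > 0"
    then obtain m where m: "inverse (real (Suc m)) < e" using reals_Archimedean by blast
    define i where "i = max j (max k m)"
    have "{n. \<exists>x\<in>Z j k. e \<le> \<bar>f n x\<bar>} \<subseteq> A i"
    proof
      fix n assume "n \<in> {n. \<exists>x\<in>Z j k. e \<le> \<bar>f n x\<bar>}"
      then obtain x \<alpha> where a: "\<alpha> \<in> K" "\<forall>i\<ge>j. E \<alpha> i \<subseteq> A i" "x \<in> Y \<alpha> k" "e \<le> \<bar>f n x\<bar>"
        unfolding Z_def by blast
      have "1 / (real m + 1) \<le> \<bar>f n x\<bar>" using m a(4) by (simp add: inverse_eq_divide add.commute)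
      then have "n \<in> B \<alpha> k m" unfolding B_def using a(3) by blast
      then have "n \<in> E \<alpha> i" unfolding E_def i_def by (intro UN_I[of "(k,m)"]) auto
      moreover have "i \<ge> j" unfolding i_def by simp
      ultimately show "n \<in> A i" using a(2) by blast
    qed
    then show "{n. \<exists>x\<in>Z j k. e \<le> \<bar>f n x\<bar>} \<in> I" using ideal_sub[OF I AI] by blast
  qed
  have "T = (\<Union>p. Yk p)"
  proof
    show "T \<subseteq> (\<Union>p. Yk p)"
    proof
      fix x assume "x \<in> T"
      then obtain \<alpha> where a: "\<alpha> \<in> K" "x \<in> XA \<alpha>" using T by blast
      then obtain k where k: "x \<in> Y \<alpha> k" using Y by blast
      obtain j where j: "\<forall>i\<ge>j. E \<alpha> i \<subseteq> A i"
      proof -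
        obtain b where "\<forall>n\<in>{n. \<not> E \<alpha> n \<subseteq> A n}. n \<le> b"
          using fin[OF a(1)] finite_nat_set_iff_bounded_le by blast
        then have "\<forall>i\<ge>Suc b. E \<alpha> i \<subseteq> A i" by force
        then show ?thesis using that by blast
      qed
      have "x \<in> Z j k" unfolding Z_def using a j k by blast
      then have "x \<in> Yk (prod_encode (j,k))" unfolding Yk_def by simp
      then show "x \<in> (\<Union>p. Yk p)" by blast
    qed
  next
    show "(\<Union>p. Yk p) \<subseteq> T"
    proof
      fix x assume "x \<in> (\<Union>p. Yk p)"
      then obtain j k \<alpha> where "\<alpha> \<in> K" "x \<in> Y \<alpha> k" unfolding Yk_def Z_def by blast
      then show "x \<in> T" unfolding T using Y by blast
    qed
  qed
  moreover have "\<forall>p. I_uniform0 I f (Yk p)" unfolding Yk_def using Zu by blast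
  ultimately show ?thesis unfolding I_sigma_uniform0_def by blast
qed


lemma part1:
  fixes I :: "nat set set" and T :: "'a set" and K :: "'k set"
    and XA :: "'k \<Rightarrow> 'a set" and f :: "nat \<Rightarrow> 'a \<Rightarrow> real"
  assumes I: "is_ideal I"
    and T: "T = (\<Union>\<alpha>\<in>K. XA \<alpha>)"
    and cl: "card_lt_bs K I" and qn: "\<forall>\<alpha>\<in>K. I_quasi_normal0 I f (XA \<alpha>)"
  shows "I_quasi_normal0 I f T"
proof -
  define eps where "eps \<alpha> = (SOME e :: nat \<Rightarrow> real. (\<forall>n. e n > 0) \<and> I_conv0 I e \<and>
        (\<forall>x\<in>XA \<alpha>. {n. \<bar>f n x\<bar> \<ge> e n} \<in> I))" for \<alpha>
  have eps: "(\<forall>n. eps \<alpha> n > 0) \<and> I_conv0 I (eps \<alpha>) \<and>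
        (\<forall>x\<in>XA \<alpha>. {n. \<bar>f n x\<bar> \<ge> eps \<alpha> n} \<in> I)" if "\<alpha> \<in> K" for \<alpha>
  proof -
    have "\<exists>e :: nat \<Rightarrow> real. (\<forall>n. e n > 0) \<and> I_conv0 I e \<and>
        (\<forall>x\<in>XA \<alpha>. {n. \<bar>f n x\<bar> \<ge> e n} \<in> I)"
      using qn that unfolding I_quasi_normal0_def by blast
    then show ?thesis unfolding eps_def by (rule someI_ex)
  qed
  define lev where "lev \<alpha> n = nat \<lfloor>1 / eps \<alpha> n\<rfloor> - 1" for \<alpha> n
  define G where "G \<alpha> i = {n. lev \<alpha> n = i}" for \<alpha> i
  have GI: "G \<alpha> i \<in> I" if a: "\<alpha> \<in> K" for \<alpha> i
  proof -
    have "G \<alpha> i \<subseteq> {n. \<bar>eps \<alpha> n\<bar> \<ge> 1 / (real i + 2)}"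
    proof
      fix n assume "n \<in> G \<alpha> i"
      then have li: "nat \<lfloor>1 / eps \<alpha> n\<rfloor> - 1 = i" unfolding G_def lev_def by simp
      have pos: "eps \<alpha> n > 0" using eps[OF a] by blast
      have "\<lfloor>1 / eps \<alpha> n\<rfloor> \<le> int i + 1" using li by linarith
      then have "1 / eps \<alpha> n < real i + 2" by linarith
      then have "1 < (real i + 2) * eps \<alpha> n" using pos by (simp add: field_simps)
      then have "1 / (real i + 2) \<le> eps \<alpha> n" by (simp add: field_simps)
      then show "n \<in> {n. \<bar>eps \<alpha> n\<bar> \<ge> 1 / (real i + 2)}" using pos by simp
    qed
    moreover have "{n. \<bar>eps \<alpha> n\<bar> \<ge> 1 / (real i + 2)} \<in> I"
      using eps[OF a] unfolding I_conv0_def by (metis divide_pos_pos zero_less_one of_nat_0_le_iff add_nonneg_pos zero_less_numeral)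
    ultimately show ?thesis using ideal_sub[OF I] by blast
  qed
  have "G ` K \<subseteq> hatP I" unfolding hatP_def G_def using GI unfolding G_def by auto
  moreover have "\<not> bs_witness I (G ` K)"
    using not_witness_image[of "bs_witness I" K] cl unfolding card_lt_bs_def by blast
  ultimately obtain A where A: "A \<in> PI I"
    and D: "\<And>\<alpha>. \<alpha> \<in> K \<Longrightarrow> (\<Union>n. A (Suc n) \<inter> (\<Union>i\<le>n. G \<alpha> i)) \<in> I"
    unfolding bs_witness_def by blast
  have AI: "A m \<in> I" for m using A unfolding PI_def hatP_def by blast
  have Adisj: "m \<noteq> m' \<Longrightarrow> A m \<inter> A m' = {}" for m m' using A unfolding PI_def hatP_def by blast
  have Acov: "\<exists>m. n \<in> A m" for n using A unfolding PI_def by blast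
  define L where "L n = (SOME m. n \<in> A m)" for n
  have L: "n \<in> A (L n)" for n unfolding L_def using Acov by (rule someI_ex)
  define e where "e n = 1 / (real (L n) + 1)" for n
  have epos: "\<forall>n. e n > 0" unfolding e_def by simp
  have econv: "I_conv0 I e" unfolding I_conv0_def
  proof (intro allI impI)
    fix d :: real assume d: "d > 0"
    define M where "M = nat \<lceil>1 / d\<rceil>"
    have "{n. \<bar>e n\<bar> \<ge> d} \<subseteq> (\<Union>m\<in>{..M}. A m)"
    proof
      fix n assume "n \<in> {n. \<bar>e n\<bar> \<ge> d}"
      then have "d \<le> 1 / (real (L n) + 1)" unfolding e_def by simp
      then have "d * (real (L n) + 1) \<le> 1" by (simp add: field_simps)
      then have "real (L n) + 1 \<le> 1 / d" using d by (simp add: field_simps)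
      then have "L n \<le> M" unfolding M_def by linarith
      then show "n \<in> (\<Union>m\<in>{..M}. A m)" using L by blast
    qed
    moreover have "(\<Union>m\<in>{..M}. A m) \<in> I" by (rule ideal_fin_Union[OF I]) (auto intro: AI)
    ultimately show "{n. \<bar>e n\<bar> \<ge> d} \<in> I" using ideal_sub[OF I] by blast
  qed
  have "{n. \<bar>f n x\<bar> \<ge> e n} \<in> I" if x: "x \<in> T" for x
  proof -
    obtain \<alpha> where a: "\<alpha> \<in> K" "x \<in> XA \<alpha>" using x T by blast
    define S where "S = {n. \<bar>f n x\<bar> \<ge> eps \<alpha> n}"
    define Dl where "Dl = (\<Union>n. A (Suc n) \<inter> (\<Union>i\<le>n. G \<alpha> i))"
    have "{n. \<bar>f n x\<bar> \<ge> e n} \<subseteq> S \<union> A 0 \<union> Dl"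
    proof
      fix n assume n: "n \<in> {n. \<bar>f n x\<bar> \<ge> e n}"
      show "n \<in> S \<union> A 0 \<union> Dl"
      proof (cases "n \<in> S \<or> L n = 0")
        case True then show ?thesis using L[of n] by auto
      next
        case False
        then obtain m' where m': "L n = Suc m'" "n \<notin> S" by (meson not0_implies_Suc)
        have lt: "e n < eps \<alpha> n" using n m'(2) unfolding S_def by simp
        have pos: "eps \<alpha> n > 0" using eps[OF a(1)] by blast
        have "1 / (real (L n) + 1) < eps \<alpha> n" using lt unfolding e_def by simp
        then have "1 < eps \<alpha> n * (real (L n) + 1)" by (simp add: field_simps)
        then have "1 / eps \<alpha> n < real (L n) + 1" using pos by (simp add: field_simps)
        then have "\<lfloor>1 / eps \<alpha> n\<rfloor> \<le> int (L n)" by linarith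
        then have "lev \<alpha> n \<le> m'" unfolding lev_def using m'(1) by linarith
        then have "n \<in> A (Suc m') \<inter> (\<Union>i\<le>m'. G \<alpha> i)" using L[of n] m'(1) unfolding G_def by auto
        then show ?thesis unfolding Dl_def by blast
      qed
    qed
    moreover have "S \<union> A 0 \<union> Dl \<in> I"
      using eps[OF a(1)] a(2) AI D[OF a(1)] ideal_un[OF I] unfolding S_def Dl_def by metis
    ultimately show ?thesis using ideal_sub[OF I] by blast
  qed
  then show ?thesis unfolding I_quasi_normal0_def using epos econv by blast
qed

theorem proposition4p5:
  fixes I :: "nat set set" and X :: "'a topology" and K :: "'k set"
    and XA :: "'k \<Rightarrow> 'a set" and f :: "nat \<Rightarrow> 'a \<Rightarrow> real"
  assumes "is_ideal I"
    and "topspace X = (\<Union>\<alpha>\<in>K. XA \<alpha>)"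
    and "\<And>n. continuous_map X euclideanreal (f n)"
  shows "(card_lt_bs K I \<and> (\<forall>\<alpha>\<in>K. I_quasi_normal0 I f (XA \<alpha>))
            \<longrightarrow> I_quasi_normal0 I f (topspace X))
       \<and> (card_lt_bsigma K I \<and> (\<forall>\<alpha>\<in>K. I_sigma_uniform0 I f (XA \<alpha>))
            \<longrightarrow> I_sigma_uniform0 I f (topspace X))"
  using part1[OF assms(1,2)] part2[OF assms(1,2)] by blast

end
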